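(* For every integer $n\ge 1$, \[ \sum_{k=0}^{n}\Big(-\frac{1}{4}\Big)^k\binom{n}{k}\binom{1+2k}{k}\,k^2H_{1+2k} =\frac{3n(2-3n)}{(3-2n)(1-4n^2)4^n}\binom{1+2n}{n} \Big\{2H_{1+2n}-\frac{3}{2}H_n-\frac{3-8n-12n^2}{1-4n^2}+\frac{9+n(3-25n+6n^2)}{3n(3-2n)(2-3n)}\Big\}-\frac{1}{1+n}. \]
   Context: For an integer $m\ge 0$, $H_m$ denotes the $m$-th harmonic number: $H_0=0$ and $H_m=\sum_{j=1}^m \frac1j$ for $m\ge1$. $\binom{n}{k}$ is the usual binomial coefficient. *)

theory Defs
  imports "HOL-Analysis.Analysis"
begin

end

theory Submission
  imports Defs
begin

definition cc0 :: "real \<Rightarrow> real" where "cc0 N = (153 + 723*N + 335*N^2 - 701*N^3 - 358*N^4 + 180*N^5 + 72*N^6)"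

definition cc1 :: "real \<Rightarrow> real" where "cc1 N = (- 96 - 496*N + 724*N^2 + 1042*N^3 - 436*N^4 - 648*N^5 - 144*N^6)"

definition cc2 :: "real \<Rightarrow> real" where "cc2 N = (- 72 - 432*N - 412*N^2 + 508*N^3 + 956*N^4 + 468*N^5 + 72*N^6)"

definition Ap :: "real \<Rightarrow> real \<Rightarrow> real" where "Ap N K = (- 324 - 1326*N - 2010*N^2 - 1374*N^3 - 402*N^4 - 36*N^5)*K + (318 + 1488*N + 2124*N^2 + 1080*N^3 + 90*N^4 - 36*N^5)*K^2 + (222 + 776*N + 1420*N^2 + 1448*N^3 + 690*N^4 + 108*N^5)*K^3 + (- 318 - 1488*N - 2124*N^2 - 1080*N^3 - 90*N^4 + 36*N^5)*K^4 + (102 + 550*N + 590*N^2 - 74*N^3 - 288*N^4 - 72*N^5)*K^5"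

definition Bp :: "real \<Rightarrow> real \<Rightarrow> real" where "Bp N K = (162 + 663*N + 1005*N^2 + 687*N^3 + 201*N^4 + 18*N^5) + (165 + 582*N + 948*N^2 + 834*N^3 + 357*N^4 + 54*N^5)*K + (- 529 - 2264*N - 3554*N^2 - 2536*N^3 - 807*N^4 - 90*N^5)*K^2 + (- 151 - 364*N - 518*N^2 - 548*N^3 - 297*N^4 - 54*N^5)*K^3 + (313 + 1407*N + 2311*N^2 + 1739*N^3 + 594*N^4 + 72*N^5)*K^4 + (- 68 - 412*N - 668*N^2 - 396*N^3 - 72*N^4)*K^5"


definition tau :: "real \<Rightarrow> real" where "tau N = 3*N*(2-3*N)/((3-2*N)*(1-4*N^2))"
definition rr :: "real \<Rightarrow> real" where "rr N = - (3 - 8*N - 12*N^2)/(1 - 4*N^2) + (9 + N*(3 - 25*N + 6*N^2))/(3*N*(3 - 2*N)*(2 - 3*N))"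

lemmas fracs = add_frac_eq diff_frac_eq times_divide_times_eq times_divide_eq_left times_divide_eq_right
  minus_divide_left divide_divide_eq_left frac_eq_eq nonzero_eq_divide_eq nonzero_divide_eq_eq
  add_divide_eq_iff divide_add_eq_iff diff_divide_eq_iff divide_diff_eq_iff
  mult_eq_0_iff de_Morgan_disj numeral_neq_zero one_neq_zero simp_thms

lemma nz_facts:
  fixes n :: nat and N :: real
  assumes "n \<ge> 1" "N = real n"
  shows "N > 0" "2*N+1 > 0" "2*N-1 > 0" "3*N-2 > 0" "2*N-3 \<noteq> 0" "3*N+1 > 0" "3*N+4 > 0"
    "3-2*N \<noteq> 0" "2-3*N \<noteq> 0" "1-4*N^2 \<noteq> 0" "3-2*(N+1) \<noteq> 0" "2-3*(N+1) \<noteq> 0" "1-4*(N+1)^2 \<noteq> 0"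
    "3-2*(N+2) \<noteq> 0" "2-3*(N+2) \<noteq> 0" "1-4*(N+2)^2 \<noteq> 0"
proof -
  have N1: "N \<ge> 1" using assms by simp
  have h3: "2*N \<noteq> 3"
  proof
    assume "2*N = 3"
    hence "real (2*n) = real 3" using assms by simp
    hence "2*n = 3" by (simp only: of_nat_eq_iff)
    thus False by arith
  qed
  show "N > 0" using N1 by linarith
  show "2*N+1 > 0" using N1 by linarith
  show "2*N-1 > 0" using N1 by linarith
  show "3*N-2 > 0" using N1 by linarith
  show "3*N+1 > 0" using N1 by linarith
  show "3*N+4 > 0" using N1 by linarith
  show "2-3*N \<noteq> 0" proof assume "2-3*N = 0" then show False using N1 by (simp add: algebra_simps) qed
  show "3-2*(N+1) \<noteq> 0" proof assume "3-2*(N+1) = 0" then show False using N1 by (simp add: algebra_simps) qed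
  show "2-3*(N+1) \<noteq> 0" proof assume "2-3*(N+1) = 0" then show False using N1 by (simp add: algebra_simps) qed
  show "3-2*(N+2) \<noteq> 0" proof assume "3-2*(N+2) = 0" then show False using N1 by (simp add: algebra_simps) qed
  show "2-3*(N+2) \<noteq> 0" proof assume "2-3*(N+2) = 0" then show False using N1 by (simp add: algebra_simps) qed
  show "2*N-3 \<noteq> 0" proof assume "2*N-3 = 0" then show False using h3 by linarith qed
  show "3-2*N \<noteq> 0" proof assume "3-2*N = 0" then show False using h3 by linarith qed
  have "1-4*N^2 = (1-2*N)*(1+2*N)" "1-4*(N+1)^2 = (-1-2*N)*(3+2*N)" "1-4*(N+2)^2 = (-3-2*N)*(5+2*N)"
    by (simp_all add: power2_eq_square algebra_simps)
  then show "1-4*N^2 \<noteq> 0" "1-4*(N+1)^2 \<noteq> 0" "1-4*(N+2)^2 \<noteq> 0" using N1 by simp_all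
qed

lemma yrat:
  fixes n :: nat and N :: real
  assumes "n \<ge> 1" "N = real n"
  shows "rr N = (- 9 + 51*N - 200*N^2 + 156*N^3 + 224*N^4 - 192*N^5) / (3 * (2*N + 1) * N * (2*N - 1) * (3*N - 2) * (2*N - 3))"
    and "rr (N+1) + 2*(1/(2*N+2)+1/(2*N+3)) - 3/2*(1/(N+1)) = (19 - 220*N^2 - 192*N^3) / (6 * (2*N + 1) * (3*N + 1) * (2*N - 1))"
    and "rr (N+2) + 2*(1/(2*N+2)+1/(2*N+3)+1/(2*N+4)+1/(2*N+5)) - 3/2*(1/(N+1)+1/(N+2)) = (- 127 - 366*N - 332*N^2 - 96*N^3) / (6 * (3*N + 4) * (N + 1) * (2*N + 1))"
    and "tau (N+1) * ((2*N+3)/(2*(N+2))) = tau N * ((- 3 - 10*N - 1*N^2 + 6*N^3) / (2 * (N + 2) * N * (3*N - 2)))"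
    and "tau (N+2) * ((2*N+3)/(2*(N+2)) * ((2*N+5)/(2*(N+3)))) = tau N * ((12 - 23*N - 8*N^2 + 12*N^3) / (4 * (N + 3) * N * (3*N - 2)))"
    and "cc0 N + cc1 N * ((- 3 - 10*N - 1*N^2 + 6*N^3) / (2 * (N + 2) * N * (3*N - 2))) + cc2 N * ((12 - 23*N - 8*N^2 + 12*N^3) / (4 * (N + 3) * N * (3*N - 2))) = 0"
    and "cc0 N * ((- 9 + 51*N - 200*N^2 + 156*N^3 + 224*N^4 - 192*N^5) / (3 * (2*N + 1) * N * (2*N - 1) * (3*N - 2) * (2*N - 3))) + cc1 N * ((- 3 - 10*N - 1*N^2 + 6*N^3) / (2 * (N + 2) * N * (3*N - 2))) * ((19 - 220*N^2 - 192*N^3) / (6 * (2*N + 1) * (3*N + 1) * (2*N - 1))) + cc2 N * ((12 - 23*N - 8*N^2 + 12*N^3) / (4 * (N + 3) * N * (3*N - 2))) * ((- 127 - 366*N - 332*N^2 - 96*N^3) / (6 * (3*N + 4) * (N + 1) * (2*N + 1))) = 0"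
    and "cc0 N/(N+1) + cc1 N/(N+2) + cc2 N/(N+3) = Bp N 0/((N+1)*(N+2))"
proof -
  note nz = nz_facts[OF assms]
  have N1: "N \<ge> 1" using assms by simp
  have p: "0 < N" "0 < 2*N+1" "0 < 2*N-1" "0 < 3*N-2" "0 < 3*N+1" "0 < 3*N+4"
     "0 < N+1" "0 < N+2" "0 < N+3" "0 < 2*N+2" "0 < 2*N+3" "0 < 2*N+4" "0 < 2*N+5" "0 < 3*(N+1)" "0 < 3*(N+2)"
    using N1 by simp_all
  note d = p[THEN less_imp_neq, THEN not_sym]
  note dd = d nz
  show "rr N = (- 9 + 51*N - 200*N^2 + 156*N^3 + 224*N^4 - 192*N^5) / (3 * (2*N + 1) * N * (2*N - 1) * (3*N - 2) * (2*N - 3))"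
    unfolding rr_def using dd by (simp only: fracs dd) algebra
  show "rr (N+1) + 2*(1/(2*N+2)+1/(2*N+3)) - 3/2*(1/(N+1)) = (19 - 220*N^2 - 192*N^3) / (6 * (2*N + 1) * (3*N + 1) * (2*N - 1))"
    unfolding rr_def using dd by (simp only: fracs dd) algebra
  show "rr (N+2) + 2*(1/(2*N+2)+1/(2*N+3)+1/(2*N+4)+1/(2*N+5)) - 3/2*(1/(N+1)+1/(N+2)) = (- 127 - 366*N - 332*N^2 - 96*N^3) / (6 * (3*N + 4) * (N + 1) * (2*N + 1))"
    unfolding rr_def using dd by (simp only: fracs dd) algebra
  show "tau (N+1) * ((2*N+3)/(2*(N+2))) = tau N * ((- 3 - 10*N - 1*N^2 + 6*N^3) / (2 * (N + 2) * N * (3*N - 2)))"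
    unfolding tau_def using dd by (simp only: fracs dd) algebra
  show "tau (N+2) * ((2*N+3)/(2*(N+2)) * ((2*N+5)/(2*(N+3)))) = tau N * ((12 - 23*N - 8*N^2 + 12*N^3) / (4 * (N + 3) * N * (3*N - 2)))"
    unfolding tau_def using dd by (simp only: fracs dd) algebra
  show "cc0 N + cc1 N * ((- 3 - 10*N - 1*N^2 + 6*N^3) / (2 * (N + 2) * N * (3*N - 2))) + cc2 N * ((12 - 23*N - 8*N^2 + 12*N^3) / (4 * (N + 3) * N * (3*N - 2))) = 0"
    unfolding cc0_def cc1_def cc2_def using dd by (simp only: fracs dd) algebra
  have u0: "cc0 N * ((- 9 + 51*N - 200*N^2 + 156*N^3 + 224*N^4 - 192*N^5) / (3 * (2*N + 1) * N * (2*N - 1) * (3*N - 2) * (2*N - 3))) = (459 - 126*N - 1170*N^2 + 31666*N^3 + 5267*N^4 - 98208*N^5 - 34472*N^6 + 80192*N^7 + 30768*N^8 - 19584*N^9 - 6912*N^10) / (3 * (2*N + 1) * N * (2*N - 1) * (3*N - 2))"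
    unfolding cc0_def using dd by (simp only: fracs dd) algebra
  have u1: "cc1 N * ((- 3 - 10*N - 1*N^2 + 6*N^3) / (2 * (N + 2) * N * (3*N - 2))) * ((19 - 220*N^2 - 192*N^3) / (6 * (2*N + 1) * (3*N + 1) * (2*N - 1))) = (1368 + 6840*N - 28133*N^2 - 109877*N^3 + 89788*N^4 + 332284*N^5 - 27008*N^6 - 319760*N^7 - 67200*N^8 + 86976*N^9 + 27648*N^10) / (6 * (2*N + 1) * N * (2*N - 1) * (3*N - 2))"
    unfolding cc1_def using dd by (simp only: fracs dd) algebra
  have u2: "cc2 N * ((12 - 23*N - 8*N^2 + 12*N^3) / (4 * (N + 3) * N * (3*N - 2))) * ((- 127 - 366*N - 332*N^2 - 96*N^3) / (6 * (3*N + 4) * (N + 1) * (2*N + 1))) = (2286 + 11160*N - 8153*N^2 - 62851*N^3 - 25380*N^4 + 85108*N^5 + 74264*N^6 - 10848*N^7 - 27360*N^8 - 6912*N^9) / (6 * (2*N + 1) * N * (3*N - 2))"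
    unfolding cc2_def using dd by (simp only: fracs dd) algebra
  have f: "(459 - 126*N - 1170*N^2 + 31666*N^3 + 5267*N^4 - 98208*N^5 - 34472*N^6 + 80192*N^7 + 30768*N^8 - 19584*N^9 - 6912*N^10) / (3 * (2*N + 1) * N * (2*N - 1) * (3*N - 2)) + (1368 + 6840*N - 28133*N^2 - 109877*N^3 + 89788*N^4 + 332284*N^5 - 27008*N^6 - 319760*N^7 - 67200*N^8 + 86976*N^9 + 27648*N^10) / (6 * (2*N + 1) * N * (2*N - 1) * (3*N - 2)) + (2286 + 11160*N - 8153*N^2 - 62851*N^3 - 25380*N^4 + 85108*N^5 + 74264*N^6 - 10848*N^7 - 27360*N^8 - 6912*N^9) / (6 * (2*N + 1) * N * (3*N - 2)) = 0"
    using dd by (simp only: fracs dd) algebra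
  show "cc0 N * ((- 9 + 51*N - 200*N^2 + 156*N^3 + 224*N^4 - 192*N^5) / (3 * (2*N + 1) * N * (2*N - 1) * (3*N - 2) * (2*N - 3))) + cc1 N * ((- 3 - 10*N - 1*N^2 + 6*N^3) / (2 * (N + 2) * N * (3*N - 2))) * ((19 - 220*N^2 - 192*N^3) / (6 * (2*N + 1) * (3*N + 1) * (2*N - 1))) + cc2 N * ((12 - 23*N - 8*N^2 + 12*N^3) / (4 * (N + 3) * N * (3*N - 2))) * ((- 127 - 366*N - 332*N^2 - 96*N^3) / (6 * (3*N + 4) * (N + 1) * (2*N + 1))) = 0"
    unfolding u0 u1 u2 by (rule f)
  have y3: "cc0 N * (N+2)*(N+3) + cc1 N*(N+1)*(N+3) + cc2 N*(N+1)*(N+2) = Bp N 0 * (N+3)"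
    unfolding Bp_def cc0_def cc1_def cc2_def by (simp; algebra)
  show "cc0 N/(N+1) + cc1 N/(N+2) + cc2 N/(N+3) = Bp N 0/((N+1)*(N+2))"
    using y3 by (simp only: fracs dd) algebra
qed

lemma polyH:
  fixes N K :: real
  shows "(cc0 N*(N+2-K)*(N+1-K) + cc1 N*(N+2-K)*(N+1) + cc2 N*(N+1)*(N+2)) * K^2 * (2*(K+1)*(K+2))
   = -(N+2-K)*(2*K+3) * Ap N (K+1) - 2*(K+1)*(K+2) * Ap N K"
  unfolding cc0_def cc1_def cc2_def Ap_def by algebra

lemma polyC:
  fixes N K :: real
  shows "0 = -(N+2-K)*(2*(K+1)*(2*K+3)*Bp N (K+1) + Ap N (K+1)*(4*K+5)) - 4*(K+1)^2*(K+2)*Bp N K"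
  unfolding Ap_def Bp_def by algebra

lemma core_gen:
  fixes N K h c0 c1 c2 A0 A1 B0 B1 :: real
  assumes "N \<ge> 0" "K \<ge> 0"
    and H: "(c0*(N+2-K)*(N+1-K) + c1*(N+2-K)*(N+1) + c2*(N+1)*(N+2)) * K^2 * (2*(K+1)*(K+2))
        = -(N+2-K)*(2*K+3) * A1 - 2*(K+1)*(K+2) * A0"
    and C: "0 = -(N+2-K)*(2*(K+1)*(2*K+3)*B1 + A1*(4*K+5)) - 4*(K+1)^2*(K+2)*B0"
  shows "(c0*(N+2-K)*(N+1-K)/((N+1)*(N+2)) + c1*(N+2-K)/(N+2) + c2) * K^2 * h
   = (N+2-K)/(K+1) * (-(2*K+3)/(2*(K+2))) * (A1 * (h + 1/(2*K+2) + 1/(2*K+3)) + B1) / ((N+1)*(N+2))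
     - (A0 * h + B0)/((N+1)*(N+2))"
proof -
  have p: "0 < N+1" "0 < N+2" "0 < K+1" "0 < K+2" "0 < 2*K+2" "0 < 2*K+3" "0 < 2*(K+2)"
    using assms(1,2) by simp_all
  note d = p[THEN less_imp_neq, THEN not_sym]
  show ?thesis using H C by (simp only: fracs d) algebra
qed

lemma B1: "real (Suc m choose k) * (real m + 1 - real k) = (real m + 1) * real (m choose k)"
proof (cases "k \<le> Suc m")
  case True
  have "(Suc m - k) * (Suc m choose k) = Suc m * (m choose k)"
    using binomial_absorb_comp[of "Suc m" k] by simp
  hence "real ((Suc m - k) * (Suc m choose k)) = real (Suc m * (m choose k))" by simp
  hence "(real (Suc m) - real k) * real (Suc m choose k) = real (Suc m) * real (m choose k)"
    by (simp only: of_nat_mult of_nat_diff[OF True])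
  thus ?thesis by (simp add: algebra_simps)
next
  case False then show ?thesis by (simp add: binomial_eq_0)
qed

lemma B2: "real (m choose Suc k) * (real k + 1) = real (m choose k) * (real m - real k)"
proof (cases "k \<le> m")
  case True
  have "Suc k * (m choose Suc k) = (m - k) * (m choose k)"
    using binomial_absorption[of k m] binomial_absorb_comp[of m k] by simp
  hence "real (Suc k * (m choose Suc k)) = real ((m - k) * (m choose k))" by simp
  hence "real (Suc k) * real (m choose Suc k) = (real m - real k) * real (m choose k)"
    by (simp only: of_nat_mult of_nat_diff[OF True])
  thus ?thesis by (simp add: algebra_simps)
next
  case False then show ?thesis by (simp add: binomial_eq_0)
qed

lemma B3: "real ((1+2*(k+1)) choose (k+1)) * (real k + 2) = 2*(2*real k + 3) * real ((1+2*k) choose k)"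
proof -
  have s1: "Suc (2*k+2) = 1+2*(k+1)" "Suc k = k+1" by simp_all
  have e1: "Suc k * (Suc (2*k+2) choose Suc k) = Suc (2*k+2) * ((2*k+2) choose k)"
    by (rule Suc_times_binomial)
  have e1': "(k+1) * ((1+2*(k+1)) choose (k+1)) = (1+2*(k+1)) * ((2*k+2) choose k)"
    using e1 unfolding s1 .
  have s2: "2*k+2-k = k+2" "2*k+2-1 = 1+2*k" by simp_all
  have e2: "(2*k+2 - k) * ((2*k+2) choose k) = (2*k+2) * ((2*k+2 - 1) choose k)"
    by (rule binomial_absorb_comp)
  have e2': "(k+2) * ((2*k+2) choose k) = (2*k+2) * ((1+2*k) choose k)"
    using e2 unfolding s2 .
  define A where "A = real ((1+2*(k+1)) choose (k+1))"
  define B where "B = real ((2*k+2) choose k)"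
  define C where "C = real ((1+2*k) choose k)"
  have r1: "(real k+1) * A = (2*real k+3) * B"
    using arg_cong[OF e1', of real] unfolding A_def B_def by (simp add: algebra_simps)
  have r2: "(real k+2) * B = (2*real k+2) * C"
    using arg_cong[OF e2', of real] unfolding B_def C_def by (simp add: algebra_simps)
  have "(real k+1) * (A * (real k + 2)) = (real k+1) * (2*(2*real k + 3) * C)"
    using r1 r2 by algebra
  moreover have "real k + 1 \<noteq> 0" by (simp add: add_nonneg_pos)
  ultimately have "A * (real k + 2) = 2*(2*real k + 3) * C" by simp
  thus ?thesis unfolding A_def C_def .
qed

lemma harm_shift2: "(harm (1+2*(k+1)) :: real) = harm (1+2*k) + 1/(2*real k+2) + 1/(2*real k+3)"
proof -
  have "1+2*(k+1) = Suc (Suc (1+2*k))" by simp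
  then show ?thesis by (simp add: harm_Suc inverse_eq_divide algebra_simps)
qed

lemma harm_shift1: "(harm (n+1) :: real) = harm n + 1/(real n+1)"
  by (simp add: harm_Suc inverse_eq_divide algebra_simps)

lemma base_test: "(harm 3 :: real) = 11/6"
  by (simp add: harm_expand inverse_eq_divide)
lemma base_test2: "(5 choose 2 :: nat) = 10"
  by (simp add: eval_nat_numeral)

definition FF :: "nat \<Rightarrow> nat \<Rightarrow> real" where
  "FF n k = (-1/4::real)^k * real (n choose k) * real ((1+2*k) choose k) * (real k)^2 * harm (1+2*k)"

definition GG :: "nat \<Rightarrow> nat \<Rightarrow> real" where
  "GG n k = real ((n+2) choose k) * (-1/4::real)^k * real ((1+2*k) choose k)
     * ((Ap (real n) (real k) * harm (1+2*k) + Bp (real n) (real k)) / ((real n+1)*(real n+2)))"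

lemma point:
  "cc0 (real n) * FF n k + cc1 (real n) * FF (n+1) k + cc2 (real n) * FF (n+2) k = GG n (k+1) - GG n k"
proof -
  define N where "N = real n"
  define K where "K = real k"
  define h where "h = (harm (1+2*k) :: real)"
  define Y where "Y = real ((n+2) choose k)"
  define w where "w = (-1/4::real)^k"
  define Cb where "Cb = real ((1+2*k) choose k)"
  define X where "X = Y * w * Cb"
  have N0: "N \<ge> 0" "K \<ge> 0" unfolding N_def K_def by simp_all
  have p: "0 < N+1" "0 < N+2" "0 < K+1" "0 < K+2" "0 < 2*K+2" "0 < 2*K+3" "0 < 2*(K+2)"
    using N0 by simp_all
  note d = p[THEN less_imp_neq, THEN not_sym]
  have b1: "real ((n+1) choose k) * (N+1-K) = (N+1) * real (n choose k)"
    using B1[of n k] unfolding N_def K_def by simp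
  have b2: "Y * (N+2-K) = (N+2) * real ((n+1) choose k)"
    using B1[of "n+1" k] unfolding N_def K_def Y_def by (simp add: algebra_simps)
  have e1: "real ((n+1) choose k) = Y * (N+2-K) / (N+2)"
    using b2 d by (simp add: field_simps)
  have e0: "real (n choose k) = Y * (N+2-K) * (N+1-K) / ((N+1)*(N+2))"
  proof -
    have "real (n choose k) = real ((n+1) choose k) * (N+1-K)/(N+1)" using b1 d by (simp add: field_simps)
    also have "\<dots> = Y * (N+2-K) / (N+2) * (N+1-K)/(N+1)" unfolding e1 ..
    also have "\<dots> = Y * (N+2-K) * (N+1-K) / ((N+1)*(N+2))" using d by (simp add: field_simps)
    finally show ?thesis .
  qed
  have b3: "real ((n+2) choose (k+1)) = Y * (N+2-K) / (K+1)"
    using B2[of "n+2" k] d unfolding N_def K_def Y_def by (simp add: field_simps)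
  have b4: "real ((1+2*(k+1)) choose (k+1)) = Cb * (2*(2*K+3)) / (K+2)"
    using B3[of k] d unfolding K_def Cb_def by (simp add: field_simps)
  have hh: "(harm (1+2*(k+1)) :: real) = h + 1/(2*K+2) + 1/(2*K+3)"
    unfolding h_def K_def by (rule harm_shift2)
  have w1: "(-1/4::real)^(k+1) = -1/4 * w" unfolding w_def by simp
  have L: "cc0 N * FF n k + cc1 N * FF (n+1) k + cc2 N * FF (n+2) k
      = X * ((cc0 N*(N+2-K)*(N+1-K)/((N+1)*(N+2)) + cc1 N*(N+2-K)/(N+2) + cc2 N) * K^2 * h)"
    unfolding FF_def e0 e1 X_def
    by (simp only: Y_def[symmetric] w_def[symmetric] Cb_def[symmetric] h_def[symmetric] K_def[symmetric]
          fracs d) algebra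
  have R: "GG n (k+1) - GG n k
      = X * ((N+2-K)/(K+1) * (-(2*K+3)/(2*(K+2))) * (Ap N (K+1) * (h + 1/(2*K+2) + 1/(2*K+3)) + Bp N (K+1)) / ((N+1)*(N+2))
        - (Ap N K * h + Bp N K)/((N+1)*(N+2)))"
  proof -
    have rk: "real (k+1) = K+1" unfolding K_def by simp
    show ?thesis
      unfolding GG_def b3 b4 hh w1 rk X_def
      by (simp only: N_def[symmetric] Y_def[symmetric] w_def[symmetric] Cb_def[symmetric] h_def[symmetric] K_def[symmetric]
          fracs d) algebra
  qed
  have C: "(cc0 N*(N+2-K)*(N+1-K)/((N+1)*(N+2)) + cc1 N*(N+2-K)/(N+2) + cc2 N) * K^2 * h
   = (N+2-K)/(K+1) * (-(2*K+3)/(2*(K+2))) * (Ap N (K+1) * (h + 1/(2*K+2) + 1/(2*K+3)) + Bp N (K+1)) / ((N+1)*(N+2))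
     - (Ap N K * h + Bp N K)/((N+1)*(N+2))"
    by (rule core_gen[OF N0 polyH polyC])
  show ?thesis using L R C unfolding N_def by simp
qed

definition SS :: "nat \<Rightarrow> real" where "SS n = (\<Sum>k=0..n. FF n k)"

lemma SS_ext: "n \<le> m \<Longrightarrow> SS n = (\<Sum>k=0..m. FF n k)"
  unfolding SS_def
  by (rule sum.mono_neutral_right[symmetric]) (auto simp: FF_def binomial_eq_0)

lemma Srec:
  "cc0 (real n) * SS n + cc1 (real n) * SS (n+1) + cc2 (real n) * SS (n+2)
     = - Bp (real n) 0 / ((real n+1)*(real n+2))"
proof -
  have "cc0 (real n) * SS n + cc1 (real n) * SS (n+1) + cc2 (real n) * SS (n+2)
     = (\<Sum>k=0..n+2. cc0 (real n) * FF n k + cc1 (real n) * FF (n+1) k + cc2 (real n) * FF (n+2) k)"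
  proof -
    have s0: "SS n = (\<Sum>k=0..n+2. FF n k)" by (rule SS_ext) simp
    have s1: "SS (n+1) = (\<Sum>k=0..n+2. FF (n+1) k)" by (rule SS_ext) simp
    have s2: "SS (n+2) = (\<Sum>k=0..n+2. FF (n+2) k)" by (rule SS_ext) simp
    show ?thesis unfolding s0 s1 s2 by (simp only: sum.distrib sum_distrib_left)
  qed
  also have "\<dots> = (\<Sum>k=0..n+2. GG n (Suc k) - GG n k)"
    using point by simp
  also have "\<dots> = GG n (Suc (n+2)) - GG n 0"
    by (rule sum_Suc_diff) simp
  also have "GG n (Suc (n+2)) = 0" unfolding GG_def by (simp add: binomial_eq_0)
  also have "GG n 0 = Bp (real n) 0 / ((real n+1)*(real n+2))"
    unfolding GG_def by (simp add: Ap_def harm_expand)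
  finally show ?thesis by simp
qed

lemma cc2_pos: assumes "N \<ge> (1::real)" shows "cc2 N > 0"
proof -
  have a: "N^1 \<le> N^2" "N^2 \<le> N^3" "N^3 \<le> N^4" "N^4 \<le> N^5" "N^5 \<le> N^6" "N^0 \<le> N^2"
    using assms by (simp_all only: power_increasing)
  show ?thesis unfolding cc2_def using a[simplified] assms by linarith
qed

definition uu :: "nat \<Rightarrow> real" where "uu n = real ((1+2*n) choose n) / 4^n"

definition YY :: "nat \<Rightarrow> real" where
  "YY n = 3 * real n * (2 - 3 * real n) / ((3 - 2 * real n) * (1 - 4 * (real n)^2) * 4^n)
             * real ((1+2*n) choose n)
             * (2 * harm (1+2*n) - 3/2 * harm n
                - (3 - 8 * real n - 12 * (real n)^2) / (1 - 4 * (real n)^2)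
                + (9 + real n * (3 - 25 * real n + 6 * (real n)^2))
                  / (3 * real n * (3 - 2 * real n) * (2 - 3 * real n)))
           - 1 / (1 + real n)"

lemma Yform: "YY n = tau (real n) * uu n * (2*harm(1+2*n) - 3/2*harm n + rr (real n)) - 1/(real n + 1)"
proof -
  have e: "2 * harm (1+2*n) - 3/2 * harm n
                - (3 - 8 * real n - 12 * (real n)^2) / (1 - 4 * (real n)^2)
                + (9 + real n * (3 - 25 * real n + 6 * (real n)^2))
                  / (3 * real n * (3 - 2 * real n) * (2 - 3 * real n))
      = 2*harm(1+2*n) - 3/2*harm n + rr (real n)"
    unfolding rr_def by (simp only: minus_divide_left[symmetric] diff_conv_add_uminus add.assoc)
  have f: "3 * real n * (2 - 3 * real n) / ((3 - 2 * real n) * (1 - 4 * (real n)^2) * 4^n) * real ((1+2*n) choose n)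
     = 3 * real n * (2 - 3 * real n) / ((3 - 2 * real n) * (1 - 4 * (real n)^2)) * (real ((1+2*n) choose n) / 4^n)"
    by simp
  show ?thesis unfolding YY_def e f tau_def uu_def by (simp only: add.commute[of 1 "real n"])
qed

lemma uu_shift: "uu (n+1) = uu n * ((2*real n+3)/(2*(real n+2)))"
proof -
  have b: "real ((1+2*(n+1)) choose (n+1)) = real ((1+2*n) choose n) * (2*(2*real n+3)) / (real n+2)"
    using B3[of n] by (simp add: field_simps)
  have d: "(4::real)^n \<noteq> 0" "real n + 2 \<noteq> 0" "2*(real n+2) \<noteq> 0" by simp_all
  have p4: "(4::real)^(n+1) = 4*4^n" by simp
  show ?thesis unfolding uu_def b p4 by (simp only: fracs d) algebra
qed

lemma comb:
  fixes c0 c1 c2 t u P r0 q1 q2 V1 V2 i1 i2 i3 :: real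
  shows "c0*(t*u*(P+r0) - i1) + c1*(t*V1*u*(P+q1) - i2) + c2*(t*V2*u*(P+q2) - i3)
     = t*u*P*(c0 + c1*V1 + c2*V2) + t*u*(c0*r0 + c1*V1*q1 + c2*V2*q2) - (c0*i1 + c1*i2 + c2*i3)"
  by algebra

lemma Yrec:
  assumes "n \<ge> 1"
  shows "cc0 (real n) * YY n + cc1 (real n) * YY (n+1) + cc2 (real n) * YY (n+2)
     = - Bp (real n) 0 / ((real n+1)*(real n+2))"
proof -
  define N where "N = real n"
  define a where "a = (harm (1+2*n) :: real)"
  define b where "b = (harm n :: real)"
  define u where "u = uu n"
  define P where "P = 2*a - 3/2*b"
  note Y = yrat[OF assms N_def]
  have y0: "YY n = tau N * u * (P + rr N) - 1/(N+1)"
    unfolding Yform P_def N_def u_def a_def b_def by (simp add: algebra_simps)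
  have y1: "YY (n+1) = tau N * ((- 3 - 10*N - 1*N^2 + 6*N^3) / (2 * (N + 2) * N * (3*N - 2))) * u * (P + ((19 - 220*N^2 - 192*N^3) / (6 * (2*N + 1) * (3*N + 1) * (2*N - 1)))) - 1/(N+2)"
  proof -
    have rn: "real (n+1) = N+1" unfolding N_def by simp
    have "YY (n+1) = tau (N+1) * uu (n+1) * (2*harm(1+2*(n+1)) - 3/2*harm (n+1) + rr (N+1)) - 1/(N+1+1)"
      by (simp only: Yform rn)
    also have "\<dots> = (tau (N+1) * ((2*N+3)/(2*(N+2)))) * u
         * (P + (rr (N+1) + 2*(1/(2*N+2)+1/(2*N+3)) - 3/2*(1/(N+1)))) - 1/(N+2)"
      unfolding uu_shift harm_shift2 harm_shift1 P_def u_def a_def b_def N_def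
      by (simp add: algebra_simps)
    also have "\<dots> = tau N * ((- 3 - 10*N - 1*N^2 + 6*N^3) / (2 * (N + 2) * N * (3*N - 2))) * u * (P + ((19 - 220*N^2 - 192*N^3) / (6 * (2*N + 1) * (3*N + 1) * (2*N - 1)))) - 1/(N+2)"
      unfolding Y(2) Y(4) ..
    finally show ?thesis .
  qed
  have y2: "YY (n+2) = tau N * ((12 - 23*N - 8*N^2 + 12*N^3) / (4 * (N + 3) * N * (3*N - 2))) * u * (P + ((- 127 - 366*N - 332*N^2 - 96*N^3) / (6 * (3*N + 4) * (N + 1) * (2*N + 1)))) - 1/(N+3)"
  proof -
    have h2: "(harm (1+2*(n+2)) :: real) = a + 1/(2*N+2) + 1/(2*N+3) + 1/(2*N+4) + 1/(2*N+5)"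
    proof -
      have "(harm (1+2*((n+1)+1)) :: real) = harm (1+2*(n+1)) + 1/(2*real (n+1)+2) + 1/(2*real (n+1)+3)"
        by (rule harm_shift2)
      also have "\<dots> = a + 1/(2*N+2) + 1/(2*N+3) + 1/(2*N+4) + 1/(2*N+5)"
        unfolding harm_shift2 a_def N_def by (simp add: algebra_simps)
      finally show ?thesis by (simp add: add.assoc)
    qed
    have hb: "(harm (n+2) :: real) = b + 1/(N+1) + 1/(N+2)"
    proof -
      have "(harm ((n+1)+1) :: real) = harm (n+1) + 1/(real (n+1)+1)" by (rule harm_shift1)
      also have "\<dots> = b + 1/(N+1) + 1/(N+2)" unfolding harm_shift1 b_def N_def by (simp add: algebra_simps)
      finally show ?thesis by (simp add: add.assoc)
    qed
    have u2: "uu (n+2) = u * ((2*N+3)/(2*(N+2)) * ((2*N+5)/(2*(N+3))))"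
    proof -
      have "uu ((n+1)+1) = uu (n+1) * ((2*real (n+1)+3)/(2*(real (n+1)+2)))" by (rule uu_shift)
      also have "\<dots> = u * ((2*N+3)/(2*(N+2)) * ((2*N+5)/(2*(N+3))))"
        unfolding uu_shift u_def N_def by (simp add: algebra_simps)
      finally show ?thesis by (simp add: add.assoc)
    qed
    have rn: "real (n+2) = N+2" unfolding N_def by simp
    have "YY (n+2) = tau (N+2) * uu (n+2) * (2*harm(1+2*(n+2)) - 3/2*harm (n+2) + rr (N+2)) - 1/(N+2+1)"
      by (simp only: Yform rn)
    also have "\<dots> = (tau (N+2) * ((2*N+3)/(2*(N+2)) * ((2*N+5)/(2*(N+3))))) * u
         * (P + (rr (N+2) + 2*(1/(2*N+2)+1/(2*N+3)+1/(2*N+4)+1/(2*N+5)) - 3/2*(1/(N+1)+1/(N+2)))) - 1/(N+3)"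
      unfolding u2 h2 hb P_def by (simp add: algebra_simps)
    also have "\<dots> = tau N * ((12 - 23*N - 8*N^2 + 12*N^3) / (4 * (N + 3) * N * (3*N - 2))) * u * (P + ((- 127 - 366*N - 332*N^2 - 96*N^3) / (6 * (3*N + 4) * (N + 1) * (2*N + 1)))) - 1/(N+3)"
      unfolding Y(3) Y(5) ..
    finally show ?thesis .
  qed
  have "cc0 N * YY n + cc1 N * YY (n+1) + cc2 N * YY (n+2)
     = tau N*u*P*(cc0 N + cc1 N*((- 3 - 10*N - 1*N^2 + 6*N^3) / (2 * (N + 2) * N * (3*N - 2))) + cc2 N*((12 - 23*N - 8*N^2 + 12*N^3) / (4 * (N + 3) * N * (3*N - 2))))
       + tau N*u*(cc0 N*((- 9 + 51*N - 200*N^2 + 156*N^3 + 224*N^4 - 192*N^5) / (3 * (2*N + 1) * N * (2*N - 1) * (3*N - 2) * (2*N - 3))) + cc1 N*((- 3 - 10*N - 1*N^2 + 6*N^3) / (2 * (N + 2) * N * (3*N - 2)))*((19 - 220*N^2 - 192*N^3) / (6 * (2*N + 1) * (3*N + 1) * (2*N - 1))) + cc2 N*((12 - 23*N - 8*N^2 + 12*N^3) / (4 * (N + 3) * N * (3*N - 2)))*((- 127 - 366*N - 332*N^2 - 96*N^3) / (6 * (3*N + 4) * (N + 1) * (2*N + 1))))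
       - (cc0 N*(1/(N+1)) + cc1 N*(1/(N+2)) + cc2 N*(1/(N+3)))"
    unfolding y0 y1 y2 Y(1) by (rule comb)
  also have "\<dots> = - Bp N 0 / ((N+1)*(N+2))"
    unfolding Y(6) Y(7) using Y(8) by simp
  finally show ?thesis unfolding N_def .
qed

lemma base1: "SS 1 = YY 1"
  by (simp add: SS_def FF_def YY_def harm_expand harm_Suc inverse_eq_divide)

lemma base2: "SS 2 = YY 2"
  by (simp add: SS_def FF_def YY_def harm_expand harm_Suc inverse_eq_divide eval_nat_numeral)

lemma SY: "SS (m+1) = YY (m+1) \<and> SS (m+2) = YY (m+2)"
proof (induction m)
  case 0 then show ?case using base1 base2 by (simp add: eval_nat_numeral)
next
  case (Suc m)
  have A: "SS (m+2) = YY (m+2)" using Suc.IH by simp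
  have B: "SS (m+1) = YY (m+1)" using Suc.IH by simp
  define M where "M = real (m+1)"
  have M1: "M \<ge> 1" unfolding M_def by simp
  have e: "m+1+1 = m+2" "m+1+2 = m+3" by simp_all
  have m1: "1 \<le> m+1" by simp
  have r1: "cc0 M * SS (m+1) + cc1 M * SS (m+2) + cc2 M * SS (m+3) = - Bp M 0 / ((M+1)*(M+2))"
    using Srec[of "m+1", unfolded e, folded M_def] .
  have r2: "cc0 M * YY (m+1) + cc1 M * YY (m+2) + cc2 M * YY (m+3) = - Bp M 0 / ((M+1)*(M+2))"
    using Yrec[OF m1, unfolded e, folded M_def] .
  have "cc2 M * SS (m+3) = cc2 M * YY (m+3)" using r1[unfolded A B] r2 by linarith
  moreover have "cc2 M \<noteq> 0" using cc2_pos[OF M1] by simp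
  ultimately have "SS (m+3) = YY (m+3)" by simp
  moreover have "m+3 = Suc (Suc (Suc m))" by simp
  ultimately show ?case using A by simp
qed

theorem theorem12:
  fixes n :: nat
  assumes "n \<ge> 1"
  shows "(\<Sum>k=0..n. (-1/4::real)^k * real (n choose k) * real ((1+2*k) choose k)
            * (real k)^2 * harm (1+2*k))
         = 3 * real n * (2 - 3 * real n) / ((3 - 2 * real n) * (1 - 4 * (real n)^2) * 4^n)
             * real ((1+2*n) choose n)
             * (2 * harm (1+2*n) - 3/2 * harm n
                - (3 - 8 * real n - 12 * (real n)^2) / (1 - 4 * (real n)^2)
                + (9 + real n * (3 - 25 * real n + 6 * (real n)^2))
                  / (3 * real n * (3 - 2 * real n) * (2 - 3 * real n)))
           - 1 / (1 + real n)"
proof -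
  have "SS n = YY n" using SY[of "n-1"] assms by (cases n) auto
  thus ?thesis unfolding SS_def FF_def YY_def .
qed

end
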